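(* For every positive integer $k$ and $0<\delta\le1$, the mechanism $\mathcal{SA}^k_\delta$ admits a pure Nash equilibrium for every collection $A$, is anonymous, and is $(\delta+\frac1k)$-close to the Pareto frontier in all equilibria: for every collection $A$ and every pure Nash equilibrium outcome $x$ of $\Gamma_{\mathcal{SA}^k_\delta}(A)$ there is no $y\in\mathrm{conv}(A)$ with $y_1>x_1+\delta+\frac1k$ and $y_2>x_2+\delta+\frac1k$.
   Context: Two players bargain over a collection (multiset) of $n$ alternatives $A=(a^j)_{j\in[n]}\subset[0,1]^2$, $a^j_i$ being player $i$'s utility; players are risk neutral and the outcome of a profile is the vector of expected utilities. A $k$-uniform distribution over $[n]$ is the uniform distribution over a multiset of size $k$ of elements of $[n]$; let $k$-$UN([n])$ be the (finite) set of these. In the mechanism $\mathcal{SA}^k_\delta$ each player $i$ submits a set $L_i\subseteq k$-$UN([n])$; a $k$-uniform distribution $\mu$ is selected as follows: uniformly from all of $k$-$UN([n])$ if $L_1=L_2=\emptyset$; uniformly from $L_1\cup L_2$ if $L_1\cap L_2=\emptyset\ne L_1\cup L_2$; and with probability $1-\delta$ uniformly from $L_1\cap L_2$ and with probability $\delta$ uniformly from $L_1\cup L_2$ if $L_1\cap L_2\ne\emptyset$; then an index is drawn from $\mu$. A mechanism is anonymous if both players have the same signal set and the allocation map is symmetric in the two signals. *)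

theory Defs
  imports "HOL-Analysis.Analysis" "HOL-Library.Multiset"
begin

text \<open>A collection of n alternatives is a map a from indices j < n to points of [0,1]^2;
  fst (a j), snd (a j) are the utilities of players 1 and 2.\<close>
definition collection :: "nat \<Rightarrow> (nat \<Rightarrow> real \<times> real) \<Rightarrow> bool" where
  "collection n a \<longleftrightarrow> (\<forall>j<n. a j \<in> {0..1} \<times> {0..1})"

text \<open>k-uniform distributions over [n]: identified with multisets of size k of elements of [n]
  (the distribution assigns probability count M j / k to j).\<close>
definition kUN :: "nat \<Rightarrow> nat \<Rightarrow> nat multiset set" where
  "kUN k n = {M. size M = k \<and> set_mset M \<subseteq> {..<n}}"

definition SA_select :: "nat \<Rightarrow> real \<Rightarrow> nat \<Rightarrow> nat multiset set \<Rightarrow> nat multiset set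
    \<Rightarrow> nat multiset \<Rightarrow> real" where
  "SA_select k \<delta> n L1 L2 \<mu> =
     (if L1 = {} \<and> L2 = {} then (if \<mu> \<in> kUN k n then 1 / real (card (kUN k n)) else 0)
      else if L1 \<inter> L2 = {} then (if \<mu> \<in> L1 \<union> L2 then 1 / real (card (L1 \<union> L2)) else 0)
      else (1 - \<delta>) * (if \<mu> \<in> L1 \<inter> L2 then 1 / real (card (L1 \<inter> L2)) else 0)
           + \<delta> * (if \<mu> \<in> L1 \<union> L2 then 1 / real (card (L1 \<union> L2)) else 0))"

definition SA_alloc :: "nat \<Rightarrow> real \<Rightarrow> nat \<Rightarrow> nat multiset set \<Rightarrow> nat multiset set
    \<Rightarrow> nat \<Rightarrow> real" where
  "SA_alloc k \<delta> n L1 L2 j =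
     (\<Sum>\<mu>\<in>kUN k n. SA_select k \<delta> n L1 L2 \<mu> * (real (count \<mu> j) / real k))"

definition SA_signals :: "nat \<Rightarrow> nat \<Rightarrow> nat multiset set set" where
  "SA_signals k n = Pow (kUN k n)"

definition outcome :: "nat \<Rightarrow> (nat \<Rightarrow> real \<times> real) \<Rightarrow> (nat \<Rightarrow> real) \<Rightarrow> real \<times> real" where
  "outcome n a p = ((\<Sum>j<n. p j * fst (a j)), (\<Sum>j<n. p j * snd (a j)))"

definition pure_NE :: "'s set \<Rightarrow> ('s \<Rightarrow> 's \<Rightarrow> real \<times> real) \<Rightarrow> 's \<Rightarrow> 's \<Rightarrow> bool" where
  "pure_NE S u s1 s2 \<longleftrightarrow> s1 \<in> S \<and> s2 \<in> S \<and>
     (\<forall>t\<in>S. fst (u t s2) \<le> fst (u s1 s2)) \<and>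
     (\<forall>t\<in>S. snd (u s1 t) \<le> snd (u s1 s2))"

definition anonymous :: "'s set \<Rightarrow> ('s \<Rightarrow> 's \<Rightarrow> 'b) \<Rightarrow> bool" where
  "anonymous S g \<longleftrightarrow> (\<forall>s1\<in>S. \<forall>s2\<in>S. g s1 s2 = g s2 s1)"

end

theory Submission
  imports Defs
begin


definition avgs :: "('m \<Rightarrow> real) \<Rightarrow> 'm set \<Rightarrow> real" where
  "avgs h X = sum h X / real (card X)"

definition pay :: "'m set \<Rightarrow> real \<Rightarrow> ('m \<Rightarrow> real) \<Rightarrow> 'm set \<Rightarrow> 'm set \<Rightarrow> real" where
  "pay U \<delta> h L1 L2 = (if L1 = {} \<and> L2 = {} then avgs h U
     else if L1 \<inter> L2 = {} then avgs h (L1 \<union> L2)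
     else (1 - \<delta>) * avgs h (L1 \<inter> L2) + \<delta> * avgs h (L1 \<union> L2))"

lemma pay_sym: "pay U \<delta> h L1 L2 = pay U \<delta> h L2 L1"
  unfolding pay_def by (simp add: Int_commute Un_commute conj_commute)

lemma avg_le:
  assumes "finite S" "S \<noteq> {}" "\<forall>y\<in>S. h y \<le> m"
  shows "avgs h S \<le> m"
proof -
  have "sum h S \<le> of_nat (card S) * m" using sum_bounded_above[of S h m] assms by simp
  moreover have "card S > 0" using assms by (simp add: card_gt_0_iff)
  ultimately show ?thesis unfolding avgs_def by (simp add: pos_divide_le_eq mult.commute)
qed

lemma avg_ge:
  assumes "finite S" "S \<noteq> {}" "\<forall>y\<in>S. h y \<ge> m"
  shows "avgs h S \<ge> m"
proof -
  have "sum h S \<ge> of_nat (card S) * m" using sum_bounded_below[of S m h] assms by simp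
  moreover have "card S > 0" using assms by (simp add: card_gt_0_iff)
  ultimately show ?thesis unfolding avgs_def by (simp add: pos_le_divide_eq mult.commute)
qed

lemma avg_le_iff:
  assumes "finite S" "S \<noteq> {}"
  shows "avgs h S \<le> m \<longleftrightarrow> sum h S \<le> m * card S"
proof -
  have "card S > 0" using assms by (simp add: card_gt_0_iff)
  then show ?thesis unfolding avgs_def by (simp add: pos_divide_le_eq)
qed

lemma avg_eq_iff:
  assumes "finite S" "S \<noteq> {}"
  shows "avgs h S = m \<longleftrightarrow> sum h S = m * card S"
proof -
  have "card S > 0" using assms by (simp add: card_gt_0_iff)
  then show ?thesis unfolding avgs_def by (auto simp add: divide_eq_eq)
qed

lemma key_sum:
  assumes "finite U" "W \<subseteq> U" "B \<subseteq> W" "B \<subseteq> S" "S \<subseteq> U"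
    "sum h W = a * real (card W)" "\<forall>y\<in>W-B. h y \<ge> a" "\<forall>y\<in>U-W. h y \<le> a"
  shows "sum h S \<le> a * real (card S)"
proof -
  have fS: "finite S" "finite W" using assms finite_subset by auto
  have e1: "sum (\<lambda>y. h y - a) W = 0" using assms(6) by (simp add: sum_subtractf)
  have e2: "sum (\<lambda>y. h y - a) (W - S) \<ge> 0"
    using assms(3,4,7) by (intro sum_nonneg) auto
  have e3: "sum (\<lambda>y. h y - a) (S - W) \<le> 0"
    using assms(5,8) by (intro sum_nonpos) auto
  have "sum (\<lambda>y. h y - a) W = sum (\<lambda>y. h y - a) (W - S) + sum (\<lambda>y. h y - a) (W \<inter> S)"
    using sum.Int_Diff[OF fS(2), of "\<lambda>y. h y - a" S] by linarith
  moreover have "sum (\<lambda>y. h y - a) S = sum (\<lambda>y. h y - a) (S - W) + sum (\<lambda>y. h y - a) (S \<inter> W)"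
    using sum.Int_Diff[OF fS(1), of "\<lambda>y. h y - a" W] by linarith
  ultimately have "sum (\<lambda>y. h y - a) S \<le> 0" using e1 e2 e3 by (simp add: Int_commute)
  then show ?thesis by (simp add: sum_subtractf mult.commute)
qed

lemma key_avg:
  assumes "finite U" "W \<subseteq> U" "B \<subseteq> W" "B \<subseteq> S" "S \<subseteq> U" "S \<noteq> {}"
    "sum h W = a * real (card W)" "\<forall>y\<in>W-B. h y \<ge> a" "\<forall>y\<in>U-W. h y \<le> a"
  shows "avgs h S \<le> a"
proof -
  have "finite S" using assms(1,5) finite_subset by blast
  then show ?thesis using key_sum[OF assms(1-5,7-9)] avg_le_iff[of S h a] assms(6) by simp
qed

lemma deviation:
  assumes "finite U" "B \<subseteq> U" "B \<noteq> {}" "\<forall>y\<in>B. h y \<le> m"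
    "\<And>S. B \<subseteq> S \<Longrightarrow> S \<subseteq> U \<Longrightarrow> avgs h S \<le> a" "a \<le> m" "0 \<le> \<delta>" "\<delta> \<le> 1" "L \<subseteq> U"
  shows "pay U \<delta> h L B \<le> (1 - \<delta>) * m + \<delta> * a"
proof (cases "L \<inter> B = {}")
  case True
  then have "pay U \<delta> h L B = avgs h (L \<union> B)" using assms(3) unfolding pay_def by auto
  also have "\<dots> \<le> a" using assms by auto
  also have "\<dots> \<le> (1 - \<delta>) * m + \<delta> * a"
  proof -
    have "(1 - \<delta>) * a \<le> (1 - \<delta>) * m" using assms(6,8) by (intro mult_left_mono) auto
    then show ?thesis by (simp add: algebra_simps)
  qed
  finally show ?thesis .
next
  case False
  then have "pay U \<delta> h L B = (1 - \<delta>) * avgs h (L \<inter> B) + \<delta> * avgs h (L \<union> B)"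
    unfolding pay_def by auto
  moreover have "avgs h (L \<inter> B) \<le> m"
    using False assms by (intro avg_le) (auto intro: finite_subset)
  moreover have "avgs h (L \<union> B) \<le> a" using assms by auto
  moreover have "(1 - \<delta>) * avgs h (L \<inter> B) \<le> (1 - \<delta>) * m"
    using calculation(2) assms(8) by (intro mult_left_mono) auto
  moreover have "\<delta> * avgs h (L \<union> B) \<le> \<delta> * a"
    using calculation(3) assms(7) by (intro mult_left_mono) auto
  ultimately show ?thesis by simp
qed

lemma existence:
  fixes f g :: "'m \<Rightarrow> real"
  assumes fin: "finite U" and d0: "0 \<le> \<delta>" and d1: "\<delta> \<le> 1"
  shows "\<exists>L1 L2. L1 \<subseteq> U \<and> L2 \<subseteq> U \<and> (\<forall>L. L \<subseteq> U \<longrightarrow> pay U \<delta> f L L2 \<le> pay U \<delta> f L1 L2)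
           \<and> (\<forall>L. L \<subseteq> U \<longrightarrow> pay U \<delta> g L1 L \<le> pay U \<delta> g L1 L2)"
proof (cases "U = {}")
  case True
  then show ?thesis by auto
next
  case Une: False
  define P where "P W \<longleftrightarrow> W \<subseteq> U \<and> W \<noteq> {} \<and>
      (\<forall>y\<in>U. f y > avgs f W \<or> g y > avgs g W \<longrightarrow> y \<in> W)" for W
  have "P U" using Une unfolding P_def by auto
  then obtain W where PW: "P W" and Wmin: "\<And>W'. P W' \<Longrightarrow> card W \<le> card W'"
    using ex_has_least_nat[of P U card] by blast
  define a1 where "a1 = avgs f W"
  define a2 where "a2 = avgs g W"
  have WU: "W \<subseteq> U" and Wne: "W \<noteq> {}" and Wcl: "\<And>y. y \<in> U \<Longrightarrow> f y > a1 \<or> g y > a2 \<Longrightarrow> y \<in> W"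
    using PW unfolding P_def a1_def a2_def by auto
  have finW: "finite W" using WU fin finite_subset by blast
  have s1: "sum f W = a1 * real (card W)" using avg_eq_iff[OF finW Wne, of f a1] a1_def by simp
  have s2: "sum g W = a2 * real (card W)" using avg_eq_iff[OF finW Wne, of g a2] a2_def by simp
  have noLow: "\<not> (f y < a1 \<and> g y < a2)" if "y \<in> W" for y
  proof
    assume yl: "f y < a1 \<and> g y < a2"
    define D where "D = {y\<in>W. f y < a1 \<and> g y < a2}"
    define W' where "W' = W - D"
    have DW: "D \<subseteq> W" and Dne: "D \<noteq> {}" using that yl unfolding D_def by auto
    have finD: "finite D" using DW finW finite_subset by blast
    have W'ne: "W' \<noteq> {}"
    proof
      assume "W' = {}"
      then have "W = D" using DW unfolding W'_def by auto
      then have "\<forall>y\<in>W. f y < a1" unfolding D_def by auto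
      then have "sum f W < sum (\<lambda>_. a1) W" using finW Wne by (intro sum_strict_mono) auto
      then show False using s1 by simp
    qed
    have finW': "finite W'" using finW unfolding W'_def by auto
    have cardW': "card W' = card W - card D" "card D \<le> card W"
      unfolding W'_def using DW finW finD by (auto simp: card_Diff_subset card_mono)
    have sD1: "sum f D < a1 * real (card D)"
      using sum_strict_mono[OF finD Dne, of f "\<lambda>_. a1"] unfolding D_def by (auto simp: mult.commute)
    have sD2: "sum g D < a2 * real (card D)"
      using sum_strict_mono[OF finD Dne, of g "\<lambda>_. a2"] unfolding D_def by (auto simp: mult.commute)
    have split1: "sum f W = sum f W' + sum f D" unfolding W'_def using DW finW by (metis sum.subset_diff)
    have split2: "sum g W = sum g W' + sum g D" unfolding W'_def using DW finW by (metis sum.subset_diff)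
    have cw: "real (card W') = real (card W) - real (card D)" using cardW' by simp
    have m1: "a1 * real (card W') = a1 * real (card W) - a1 * real (card D)"
      "a2 * real (card W') = a2 * real (card W) - a2 * real (card D)" unfolding cw by (simp_all add: right_diff_distrib)
    have "sum f W' > a1 * real (card W')" using split1 sD1 s1 m1 by linarith
    then have A1: "avgs f W' > a1" using avg_le_iff[OF finW' W'ne, of f a1] by linarith
    have "sum g W' > a2 * real (card W')" using split2 sD2 s2 m1 by linarith
    then have A2: "avgs g W' > a2" using avg_le_iff[OF finW' W'ne, of g a2] by linarith
    have "P W'"
      unfolding P_def
    proof (intro conjI ballI impI)
      show "W' \<subseteq> U" using WU unfolding W'_def by auto
      show "W' \<noteq> {}" by fact
    next
      fix z assume zU: "z \<in> U" and "avgs f W' < f z \<or> avgs g W' < g z"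
      then have "f z > a1 \<or> g z > a2" using A1 A2 by auto
      moreover from this have "z \<in> W" using Wcl zU by blast
      moreover have "z \<notin> D" using calculation unfolding D_def by auto
      ultimately show "z \<in> W'" unfolding W'_def by auto
    qed
    then have "card W \<le> card W'" by (rule Wmin)
    moreover have "card D > 0" using Dne finD by (simp add: card_gt_0_iff)
    ultimately show False using cardW' by linarith
  qed
  have outside1: "\<forall>y\<in>U-W. f y \<le> a1" and outside2: "\<forall>y\<in>U-W. g y \<le> a2"
    using Wcl by force+
  show ?thesis
  proof (cases "\<exists>x\<in>U. f x \<ge> a1 \<and> g x \<ge> a2")
    case True
    define X where "X = {x\<in>U. f x \<ge> a1 \<and> g x \<ge> a2}"
    have finX: "finite X" and neX: "X \<noteq> {}" using True fin unfolding X_def by auto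
    obtain x where xX: "x \<in> X" and xm: "Max ((\<lambda>y. f y + g y) ` X) = f x + g x"
      using obtains_MAX[OF finX neX] by blast
    have xmax: "f y + g y \<le> f x + g x" if "y \<in> X" for y
      using xm Max_ge[of "(\<lambda>y. f y + g y) ` X"] finX that by (metis finite_imageI imageI)
    have xU: "x \<in> U" and fx: "f x \<ge> a1" and gx: "g x \<ge> a2" using xX unfolding X_def by auto
    have nodom: "\<not> (f y > f x \<and> g y > g x)" if "y \<in> U" for y
    proof
      assume "f y > f x \<and> g y > g x"
      then have "y \<in> X" using that fx gx unfolding X_def by auto
      then show False using xmax \<open>f y > f x \<and> g y > g x\<close> by fastforce
    qed
    define W2 where "W2 = insert x W"
    have finW2: "finite W2" and W2U: "W2 \<subseteq> U" and W2ne: "W2 \<noteq> {}"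
      using finW WU xU unfolding W2_def by auto
    have s12: "sum f W2 = a1 * real (card W2) \<and> sum g W2 = a2 * real (card W2)"
    proof (cases "x \<in> W")
      case True then show ?thesis using s1 s2 unfolding W2_def by (simp add: insert_absorb)
    next
      case False
      then have "f x = a1" "g x = a2" using Wcl xU fx gx by force+
      then show ?thesis using s1 s2 False finW unfolding W2_def by (simp add: algebra_simps)
    qed
    have noLow2: "\<not> (f y < a1 \<and> g y < a2)" if "y \<in> W2" for y
      using that noLow fx unfolding W2_def by auto
    have out1: "\<forall>y\<in>U-W2. f y \<le> a1" and out2: "\<forall>y\<in>U-W2. g y \<le> a2"
      using outside1 outside2 unfolding W2_def by auto
    define C1 where "C1 = {y\<in>W2 - {x}. f y \<ge> a1 \<and> g y \<le> g x}"
    define C2 where "C2 = W2 - {x} - C1"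
    define L1 where "L1 = insert x C1"
    define L2 where "L2 = insert x C2"
    have L1U: "L1 \<subseteq> U" and L2U: "L2 \<subseteq> U" using W2U xU unfolding L1_def L2_def C1_def C2_def by auto
    have LI: "L1 \<inter> L2 = {x}" and LU: "L1 \<union> L2 = W2"
      unfolding L1_def L2_def C1_def C2_def W2_def by auto
    have L1W2: "L1 \<subseteq> W2" "L2 \<subseteq> W2" using LU by auto
    have C2prop: "f y \<le> f x \<and> g y \<ge> a2" if "y \<in> C2" for y
    proof -
      have yW: "y \<in> W2" "y \<noteq> x" and "\<not> (f y \<ge> a1 \<and> g y \<le> g x)" using that unfolding C2_def C1_def by auto
      then have "f y < a1 \<or> g y > g x" by auto
      then show ?thesis
      proof
        assume "f y < a1" then show ?thesis using fx noLow2[OF yW(1)] by auto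
      next
        assume "g y > g x" then show ?thesis using nodom[of y] yW W2U gx by force
      qed
    qed
    have AW: "avgs f W2 = a1" "avgs g W2 = a2" using avg_eq_iff[OF finW2 W2ne] s12 by auto
    have Ax: "avgs f {x} = f x" "avgs g {x} = g x" by (simp_all add: avgs_def)
    have xL: "x \<in> L1" unfolding L1_def by auto
    have pay1: "pay U \<delta> f L1 L2 = (1 - \<delta>) * f x + \<delta> * a1"
      unfolding pay_def using LI LU AW Ax xL by auto
    have pay2: "pay U \<delta> g L1 L2 = (1 - \<delta>) * g x + \<delta> * a2"
      unfolding pay_def using LI LU AW Ax xL by auto
    have D1: "W2 - L2 = C1" unfolding L2_def C2_def C1_def by blast
    have D2: "W2 - L1 = C2" unfolding L1_def C2_def C1_def by blast
    have C1f: "\<forall>y\<in>W2 - L2. f y \<ge> a1" unfolding D1 C1_def by blast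
    have C2g: "\<forall>y\<in>W2 - L1. g y \<ge> a2" unfolding D2 using C2prop by blast
    have dev1: "pay U \<delta> f L L2 \<le> pay U \<delta> f L1 L2" if "L \<subseteq> U" for L
      unfolding pay1
    proof (rule deviation[OF fin L2U _ _ _ fx d0 d1 that])
      show "L2 \<noteq> {}" unfolding L2_def by auto
      show "\<forall>y\<in>L2. f y \<le> f x" using C2prop unfolding L2_def by auto
      fix S assume "L2 \<subseteq> S" "S \<subseteq> U"
      then show "avgs f S \<le> a1"
        using key_avg[OF fin W2U L1W2(2) _ _ _ conjunct1[OF s12] C1f out1] \<open>L2 \<noteq> {}\<close> by blast
    qed
    have dev2: "pay U \<delta> g L1 L \<le> pay U \<delta> g L1 L2" if "L \<subseteq> U" for L
      unfolding pay2 pay_sym[of U \<delta> g L1 L]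
    proof (rule deviation[OF fin L1U _ _ _ gx d0 d1 that])
      show "L1 \<noteq> {}" unfolding L1_def by auto
      show "\<forall>y\<in>L1. g y \<le> g x" unfolding L1_def C1_def by auto
      fix S assume "L1 \<subseteq> S" "S \<subseteq> U"
      then show "avgs g S \<le> a2"
        using key_avg[OF fin W2U L1W2(1) _ _ _ conjunct2[OF s12] C2g out2] \<open>L1 \<noteq> {}\<close> by blast
    qed
    show ?thesis using L1U L2U dev1 dev2 by blast
  next
    case False
    define C1 where "C1 = {y\<in>W. f y \<ge> a1}"
    define C2 where "C2 = W - C1"
    have C1p: "g y < a2" if "y \<in> C1" for y using False that WU unfolding C1_def by force
    have C2p: "f y < a1 \<and> g y \<ge> a2" if "y \<in> C2" for y using noLow that unfolding C2_def C1_def by force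
    have C1ne: "C1 \<noteq> {}"
    proof
      assume "C1 = {}"
      then have "\<forall>y\<in>W. f y < a1" unfolding C1_def by auto
      then have "sum f W < sum (\<lambda>_. a1) W" using finW Wne by (intro sum_strict_mono) auto
      then show False using s1 by simp
    qed
    have C2ne: "C2 \<noteq> {}"
    proof
      assume "C2 = {}"
      then have "\<forall>y\<in>W. g y < a2" using C1p unfolding C2_def by auto
      then have "sum g W < sum (\<lambda>_. a2) W" using finW Wne by (intro sum_strict_mono) auto
      then show False using s2 by simp
    qed
    have C1U: "C1 \<subseteq> U" and C2U: "C2 \<subseteq> U" using WU unfolding C1_def C2_def by auto
    have CI: "C1 \<inter> C2 = {}" and CU: "C1 \<union> C2 = W" unfolding C1_def C2_def by auto
    have pay1: "pay U \<delta> f C1 C2 = a1"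
      unfolding pay_def using CI CU C1ne a1_def by simp
    have pay2: "pay U \<delta> g C1 C2 = a2"
      unfolding pay_def using CI CU C1ne a2_def by simp
    have e1: "a1 = (1 - \<delta>) * a1 + \<delta> * a1" "a2 = (1 - \<delta>) * a2 + \<delta> * a2" by (simp_all add: algebra_simps)
    have E1: "W - C2 = C1" unfolding C2_def C1_def by blast
    have E2: "W - C1 = C2" unfolding C2_def C1_def by blast
    have C1f: "\<forall>y\<in>W - C2. f y \<ge> a1" unfolding E1 C1_def by blast
    have C2g: "\<forall>y\<in>W - C1. g y \<ge> a2" unfolding E2 using C2p by blast
    have C2W: "C2 \<subseteq> W" "C1 \<subseteq> W" unfolding C2_def C1_def by auto
    have dev1: "pay U \<delta> f L C2 \<le> pay U \<delta> f C1 C2" if "L \<subseteq> U" for L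
      unfolding pay1
      apply (subst e1(1))
    proof (rule deviation[OF fin C2U C2ne _ _ order.refl d0 d1 that])
      show "\<forall>y\<in>C2. f y \<le> a1" using C2p by (auto simp: less_imp_le)
      fix S assume "C2 \<subseteq> S" "S \<subseteq> U"
      then show "avgs f S \<le> a1"
        using key_avg[OF fin WU C2W(1) _ _ _ s1 C1f outside1] C2ne by blast
    qed
    have dev2: "pay U \<delta> g C1 L \<le> pay U \<delta> g C1 C2" if "L \<subseteq> U" for L
      unfolding pay2 pay_sym[of U \<delta> g C1 L]
      apply (subst e1(2))
    proof (rule deviation[OF fin C1U C1ne _ _ order.refl d0 d1 that])
      show "\<forall>y\<in>C1. g y \<le> a2" using C1p by (auto simp: less_imp_le)
      fix S assume "C1 \<subseteq> S" "S \<subseteq> U"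
      then show "avgs g S \<le> a2"
        using key_avg[OF fin WU C2W(2) _ _ _ s2 C2g outside2] C1ne by blast
    qed
    show ?thesis using C1U C2U dev1 dev2 by blast
  qed
qed

lemma avg_insert:
  assumes "finite W" "W \<noteq> {}" "z \<notin> W" "avgs f (insert z W) \<le> avgs f W"
  shows "f z \<le> avgs f W"
proof -
  have c: "real (card W) > 0" using assms by (simp add: card_gt_0_iff)
  have "avgs f (insert z W) = (f z + sum f W) / (real (card W) + 1)"
    using assms unfolding avgs_def by simp
  with assms(4) have "(f z + sum f W) / (real (card W) + 1) \<le> sum f W / real (card W)"
    unfolding avgs_def by simp
  then have "(f z + sum f W) * real (card W) \<le> sum f W * (real (card W) + 1)"
    using c by (simp add: divide_le_eq le_divide_eq field_simps)
  then have "f z * real (card W) \<le> sum f W" by (simp add: algebra_simps)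
  then show ?thesis using c unfolding avgs_def by (simp add: le_divide_eq)
qed

lemma closeness:
  fixes f g :: "'m \<Rightarrow> real"
  assumes fin: "finite U" and d: "0 < \<delta>" and L1U: "L1 \<subseteq> U" and L2U: "L2 \<subseteq> U"
    and ne1: "\<forall>L. L \<subseteq> U \<longrightarrow> pay U \<delta> f L L2 \<le> pay U \<delta> f L1 L2"
    and ne2: "\<forall>L. L \<subseteq> U \<longrightarrow> pay U \<delta> g L1 L \<le> pay U \<delta> g L1 L2"
    and bf: "\<forall>\<mu>\<in>U. 0 \<le> f \<mu> \<and> f \<mu> \<le> 1" and bg: "\<forall>\<mu>\<in>U. 0 \<le> g \<mu> \<and> g \<mu> \<le> 1"
    and mu: "\<mu> \<in> U"
  shows "\<not> (f \<mu> > pay U \<delta> f L1 L2 + \<delta> \<and> g \<mu> > pay U \<delta> g L1 L2 + \<delta>)"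
proof
  assume H: "f \<mu> > pay U \<delta> f L1 L2 + \<delta> \<and> g \<mu> > pay U \<delta> g L1 L2 + \<delta>"
  then have H1: "f \<mu> > pay U \<delta> f L1 L2 + \<delta>" and H2: "g \<mu> > pay U \<delta> g L1 L2 + \<delta>" by auto
  have muU: "{\<mu>} \<subseteq> U" using mu by auto
  have dev1: "pay U \<delta> f {\<mu>} L2 \<le> pay U \<delta> f L1 L2" using ne1 muU by blast
  have dev2: "pay U \<delta> g L1 {\<mu>} \<le> pay U \<delta> g L1 L2" using ne2 muU by blast
  have fm: "0 \<le> f \<mu>" "f \<mu> \<le> 1" and gm: "0 \<le> g \<mu>" "g \<mu> \<le> 1" using bf bg mu by auto
  have av1: "avgs h {\<mu>} = h \<mu>" for h :: "'m \<Rightarrow> real" by (simp add: avgs_def)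
  show False
  proof (cases "L1 = {} \<and> L2 = {}")
    case True
    then have "pay U \<delta> f {\<mu>} L2 = f \<mu>" unfolding pay_def by (simp add: av1)
    then show False using dev1 H1 d by linarith
  next
    case nb: False
    show False
    proof (cases "\<mu> \<in> L2")
      case True
      have fin2: "finite (insert \<mu> L2)" using L2U fin finite_subset by blast
      have A0: "avgs f (insert \<mu> L2) \<ge> 0" using bf L2U mu by (intro avg_ge[OF fin2]) auto
      have "{\<mu>} \<inter> L2 = {\<mu>}" "{\<mu>} \<union> L2 = insert \<mu> L2" using True by auto
      then have P: "pay U \<delta> f {\<mu>} L2 = (1 - \<delta>) * f \<mu> + \<delta> * avgs f (insert \<mu> L2)"
        unfolding pay_def by (simp add: av1)
      have "\<delta> * f \<mu> \<le> \<delta>" using fm d by (simp add: mult_left_le)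
      moreover have "\<delta> * avgs f (insert \<mu> L2) \<ge> 0" using A0 d by simp
      ultimately have "pay U \<delta> f {\<mu>} L2 \<ge> f \<mu> - \<delta>" unfolding P by (simp add: algebra_simps)
      then show False using dev1 H1 by linarith
    next
      case n2: False
      show False
      proof (cases "\<mu> \<in> L1")
        case True
        have fin1: "finite (insert \<mu> L1)" using L1U fin finite_subset by blast
        have A0: "avgs g (insert \<mu> L1) \<ge> 0" using bg L1U mu by (intro avg_ge[OF fin1]) auto
        have "L1 \<inter> {\<mu>} = {\<mu>}" "L1 \<union> {\<mu>} = insert \<mu> L1" using True by auto
        then have P: "pay U \<delta> g L1 {\<mu>} = (1 - \<delta>) * g \<mu> + \<delta> * avgs g (insert \<mu> L1)"
          unfolding pay_def by (simp add: av1)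
        have "\<delta> * g \<mu> \<le> \<delta>" using gm d by (simp add: mult_left_le)
        moreover have "\<delta> * avgs g (insert \<mu> L1) \<ge> 0" using A0 d by simp
        ultimately have "pay U \<delta> g L1 {\<mu>} \<ge> g \<mu> - \<delta>" unfolding P by (simp add: algebra_simps)
        then show False using dev2 H2 by linarith
      next
        case n1: False
        define W where "W = L1 \<union> L2"
        have finW: "finite W" using L1U L2U fin finite_subset unfolding W_def by (meson le_sup_iff)
        have Wne: "W \<noteq> {}" using nb unfolding W_def by auto
        have muW: "\<mu> \<notin> W" using n1 n2 unfolding W_def by auto
        have iL: "insert \<mu> L1 \<subseteq> U" using L1U mu by auto
        have dL: "L1 - L2 \<subseteq> U" using L1U by auto
        have devI: "pay U \<delta> f (insert \<mu> L1) L2 \<le> pay U \<delta> f L1 L2" using ne1 iL by blast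
        have devD: "pay U \<delta> f (L1 - L2) L2 \<le> pay U \<delta> f L1 L2" using ne1 dL by blast
        have iW: "insert \<mu> L1 \<union> L2 = insert \<mu> W" unfolding W_def by auto
        have "f \<mu> \<le> pay U \<delta> f L1 L2"
        proof (cases "L1 \<inter> L2 = {}")
          case True
          have p0: "pay U \<delta> f L1 L2 = avgs f W" using True nb unfolding pay_def W_def by auto
          have "insert \<mu> L1 \<inter> L2 = {}" using True n2 by auto
          then have "pay U \<delta> f (insert \<mu> L1) L2 = avgs f (insert \<mu> W)"
            unfolding pay_def iW by simp
          then have "avgs f (insert \<mu> W) \<le> avgs f W" using devI p0 by simp
          then show ?thesis using avg_insert[OF finW Wne muW] p0 by simp
        next
          case False
          have p0: "pay U \<delta> f L1 L2 = (1 - \<delta>) * avgs f (L1 \<inter> L2) + \<delta> * avgs f W"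
            using False unfolding pay_def W_def by auto
          have e: "insert \<mu> L1 \<inter> L2 = L1 \<inter> L2" using n2 by auto
          then have "pay U \<delta> f (insert \<mu> L1) L2 = (1 - \<delta>) * avgs f (L1 \<inter> L2) + \<delta> * avgs f (insert \<mu> W)"
            using False unfolding pay_def iW by simp
          then have "\<delta> * avgs f (insert \<mu> W) \<le> \<delta> * avgs f W" using devI p0 by simp
          then have "avgs f (insert \<mu> W) \<le> avgs f W" using d by simp
          then have a: "f \<mu> \<le> avgs f W" using avg_insert[OF finW Wne muW] by simp
          have "(L1 - L2) \<inter> L2 = {}" "(L1 - L2) \<union> L2 = W" "L2 \<noteq> {}" using False unfolding W_def by auto
          then have "pay U \<delta> f (L1 - L2) L2 = avgs f W" unfolding pay_def by simp
          then show ?thesis using a devD by simp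
        qed
        then show False using H1 d by simp
      qed
    qed
  qed
qed

lemma sum_count_size:
  assumes "set_mset M \<subseteq> A" "finite A"
  shows "(\<Sum>j\<in>A. count M j) = size M"
  using assms
proof (induction M)
  case empty then show ?case by simp
next
  case (add x M)
  then have xA: "x \<in> A" by auto
  have "(\<Sum>j\<in>A. count (add_mset x M) j) = (\<Sum>j\<in>A. count M j + (if j = x then 1 else 0))"
    by (intro sum.cong) auto
  also have "\<dots> = (\<Sum>j\<in>A. count M j) + 1" using xA add.prems by (simp add: sum.distrib)
  finally show ?case using add by simp
qed

lemma finite_kUN: "finite (kUN k n)"
proof -
  have "kUN k n = multisets_of_size {..<n} k" unfolding kUN_def multisets_of_size_def by auto
  then show ?thesis by auto
qed

definition Vh :: "nat \<Rightarrow> nat \<Rightarrow> (nat \<Rightarrow> real) \<Rightarrow> nat multiset \<Rightarrow> real" where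
  "Vh n k h \<mu> = (\<Sum>j<n. real (count \<mu> j) / real k * h j)"

lemma Vh_bounds:
  assumes "\<mu> \<in> kUN k n" "\<forall>j<n. 0 \<le> h j \<and> h j \<le> 1" "k > 0"
  shows "0 \<le> Vh n k h \<mu> \<and> Vh n k h \<mu> \<le> 1"
proof
  show "0 \<le> Vh n k h \<mu>" unfolding Vh_def using assms by (intro sum_nonneg) auto
  have "Vh n k h \<mu> \<le> (\<Sum>j<n. real (count \<mu> j) / real k)"
    unfolding Vh_def
  proof (intro sum_mono)
    fix j assume "j \<in> {..<n}"
    then have "real (count \<mu> j) * h j \<le> real (count \<mu> j)" using assms by (simp add: mult_left_le)
    then show "real (count \<mu> j) / real k * h j \<le> real (count \<mu> j) / real k"
      by (simp add: divide_right_mono)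
  qed
  also have "\<dots> = real (\<Sum>j<n. count \<mu> j) / real k" by (simp add: sum_divide_distrib)
  also have "\<dots> = 1" using assms sum_count_size[of \<mu> "{..<n}"] unfolding kUN_def by auto
  finally show "Vh n k h \<mu> \<le> 1" .
qed

lemma sum_if_avg:
  assumes "finite U" "X \<subseteq> U"
  shows "(\<Sum>\<mu>\<in>U. (if \<mu> \<in> X then 1 / real (card X) else 0) * h \<mu>) = avgs h X"
proof -
  have "(\<Sum>\<mu>\<in>U. (if \<mu> \<in> X then 1 / real (card X) else 0) * h \<mu>)
      = (\<Sum>\<mu>\<in>U. (if \<mu> \<in> X then h \<mu> / real (card X) else 0))"
    by (intro sum.cong) auto
  also have "\<dots> = (\<Sum>\<mu>\<in>U \<inter> X. h \<mu> / real (card X))" using assms by (simp add: sum.inter_restrict)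
  also have "U \<inter> X = X" using assms by auto
  finally show ?thesis by (simp add: avgs_def sum_divide_distrib)
qed

lemma select_sum:
  assumes "L1 \<subseteq> kUN k n" "L2 \<subseteq> kUN k n"
  shows "(\<Sum>\<mu>\<in>kUN k n. SA_select k \<delta> n L1 L2 \<mu> * h \<mu>) = pay (kUN k n) \<delta> h L1 L2"
proof -
  have fin: "finite (kUN k n)" by (rule finite_kUN)
  show ?thesis
  proof (cases "L1 = {} \<and> L2 = {}")
    case True
    then show ?thesis unfolding SA_select_def pay_def using sum_if_avg[OF fin order.refl, of h] by simp
  next
    case F1: False
    show ?thesis
    proof (cases "L1 \<inter> L2 = {}")
      case True
      have "(\<Sum>\<mu>\<in>kUN k n. SA_select k \<delta> n L1 L2 \<mu> * h \<mu>)
        = (\<Sum>\<mu>\<in>kUN k n. (if \<mu> \<in> L1 \<union> L2 then 1 / real (card (L1 \<union> L2)) else 0) * h \<mu>)"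
        unfolding SA_select_def using F1 True by (intro sum.cong) auto
      also have "\<dots> = avgs h (L1 \<union> L2)" using sum_if_avg[OF fin, of "L1 \<union> L2" h] assms by simp
      finally show ?thesis unfolding pay_def using F1 True by auto
    next
      case False
      have neL: "L1 \<noteq> {}" using False by auto
      have "(\<Sum>\<mu>\<in>kUN k n. SA_select k \<delta> n L1 L2 \<mu> * h \<mu>)
        = (\<Sum>\<mu>\<in>kUN k n. (1 - \<delta>) * ((if \<mu> \<in> L1 \<inter> L2 then 1 / real (card (L1 \<inter> L2)) else 0) * h \<mu>)
              + \<delta> * ((if \<mu> \<in> L1 \<union> L2 then 1 / real (card (L1 \<union> L2)) else 0) * h \<mu>))"
        unfolding SA_select_def using neL False by (intro sum.cong) (simp_all add: distrib_right mult.assoc)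
      also have "\<dots> = (1 - \<delta>) * (\<Sum>\<mu>\<in>kUN k n. (if \<mu> \<in> L1 \<inter> L2 then 1 / real (card (L1 \<inter> L2)) else 0) * h \<mu>)
              + \<delta> * (\<Sum>\<mu>\<in>kUN k n. (if \<mu> \<in> L1 \<union> L2 then 1 / real (card (L1 \<union> L2)) else 0) * h \<mu>)"
        by (simp only: sum.distrib sum_distrib_left[symmetric])
      also have "\<dots> = (1 - \<delta>) * avgs h (L1 \<inter> L2) + \<delta> * avgs h (L1 \<union> L2)"
      proof -
        have "L1 \<inter> L2 \<subseteq> kUN k n" "L1 \<union> L2 \<subseteq> kUN k n" using assms by auto
        then show ?thesis using sum_if_avg[OF fin, of "L1 \<inter> L2" h] sum_if_avg[OF fin, of "L1 \<union> L2" h]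
          by (simp only:)
      qed
      finally show ?thesis unfolding pay_def using neL False by simp
    qed
  qed
qed

lemma outcome_pay:
  assumes "L1 \<subseteq> kUN k n" "L2 \<subseteq> kUN k n"
  shows "fst (outcome n a (SA_alloc k \<delta> n L1 L2)) = pay (kUN k n) \<delta> (Vh n k (\<lambda>j. fst (a j))) L1 L2"
    and "snd (outcome n a (SA_alloc k \<delta> n L1 L2)) = pay (kUN k n) \<delta> (Vh n k (\<lambda>j. snd (a j))) L1 L2"
proof -
  have gen: "(\<Sum>j<n. SA_alloc k \<delta> n L1 L2 j * h j) = pay (kUN k n) \<delta> (Vh n k h) L1 L2" for h
  proof -
    have "(\<Sum>j<n. SA_alloc k \<delta> n L1 L2 j * h j)
        = (\<Sum>j<n. \<Sum>\<mu>\<in>kUN k n. SA_select k \<delta> n L1 L2 \<mu> * (real (count \<mu> j) / real k * h j))"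
      unfolding SA_alloc_def by (simp add: sum_distrib_right mult.assoc)
    also have "\<dots> = (\<Sum>\<mu>\<in>kUN k n. SA_select k \<delta> n L1 L2 \<mu> * Vh n k h \<mu>)"
      unfolding Vh_def by (subst sum.swap) (simp add: sum_distrib_left)
    also have "\<dots> = pay (kUN k n) \<delta> (Vh n k h) L1 L2" by (rule select_sum[OF assms])
    finally show ?thesis .
  qed
  show "fst (outcome n a (SA_alloc k \<delta> n L1 L2)) = pay (kUN k n) \<delta> (Vh n k (\<lambda>j. fst (a j))) L1 L2"
    unfolding outcome_def using gen by simp
  show "snd (outcome n a (SA_alloc k \<delta> n L1 L2)) = pay (kUN k n) \<delta> (Vh n k (\<lambda>j. snd (a j))) L1 L2"
    unfolding outcome_def using gen by simp
qed




lemma fl_props: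
  assumes "(X::real) \<ge> 0"
  shows "real (nat \<lfloor>X\<rfloor>) \<le> X" "X < real (nat \<lfloor>X\<rfloor>) + 1"
  using assms by (simp_all add: of_nat_floor)

lemma round3:
  fixes X Y Z :: real
  assumes "X \<ge> 0" "Y \<ge> 0" "Z \<ge> 0" "X + Y + Z = real k"
  shows "\<exists>c1 c2 c3. c1 + c2 + c3 = k \<and> (\<forall>b1 b2 b3. 0 \<le> b1 \<and> b1 \<le> 1 \<and> 0 \<le> b2 \<and> b2 \<le> 1 \<and> 0 \<le> b3 \<and> b3 \<le> 1
       \<longrightarrow> X * b1 + Y * b2 + Z * b3 \<le> real c1 * b1 + real c2 * b2 + real c3 * b3 + 1)"
proof -
  define f1 where "f1 = nat \<lfloor>X\<rfloor>"
  define f2 where "f2 = nat \<lfloor>Y\<rfloor>"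
  define f3 where "f3 = nat \<lfloor>Z\<rfloor>"
  have h1: "real f1 \<le> X" "X < real f1 + 1" using fl_props[OF assms(1)] f1_def by auto
  have h2: "real f2 \<le> Y" "Y < real f2 + 1" using fl_props[OF assms(2)] f2_def by auto
  have h3: "real f3 \<le> Z" "Z < real f3 + 1" using fl_props[OF assms(3)] f3_def by auto
  have le: "f1 + f2 + f3 \<le> k" using h1 h2 h3 assms(4) by linarith
  have lt: "k < f1 + f2 + f3 + 3" using h1 h2 h3 assms(4) by linarith
  have bnd: "\<And>e b. 0 \<le> e \<Longrightarrow> 0 \<le> b \<Longrightarrow> b \<le> 1 \<Longrightarrow> e * b \<le> (e::real)"
    by (simp add: mult_left_le)
  have bnd2: "\<And>e b. e \<le> 0 \<Longrightarrow> 0 \<le> b \<Longrightarrow> e * b \<le> (0::real)"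
    by (simp add: mult_nonpos_nonneg)
  have "k = f1 + f2 + f3 \<or> k = f1 + f2 + f3 + 1 \<or> k = f1 + f2 + f3 + 2" using le lt by linarith
  then show ?thesis
  proof (elim disjE)
    assume kk: "k = f1 + f2 + f3"
    show ?thesis
    proof (intro exI conjI allI impI)
      show "f1 + f2 + f3 = k" using kk by simp
      fix b1 b2 b3 :: real assume b: "0 \<le> b1 \<and> b1 \<le> 1 \<and> 0 \<le> b2 \<and> b2 \<le> 1 \<and> 0 \<le> b3 \<and> b3 \<le> 1"
      have "(X - f1) * b1 \<le> X - f1" "(Y - f2) * b2 \<le> Y - f2" "(Z - f3) * b3 \<le> Z - f3"
        using bnd h1 h2 h3 b by auto
      then show "X * b1 + Y * b2 + Z * b3 \<le> real f1 * b1 + real f2 * b2 + real f3 * b3 + 1"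
        using assms(4) kk by (simp add: algebra_simps)
    qed
  next
    assume kk: "k = f1 + f2 + f3 + 1"
    show ?thesis
    proof (intro exI conjI allI impI)
      show "(f1 + 1) + f2 + f3 = k" using kk by simp
      fix b1 b2 b3 :: real assume b: "0 \<le> b1 \<and> b1 \<le> 1 \<and> 0 \<le> b2 \<and> b2 \<le> 1 \<and> 0 \<le> b3 \<and> b3 \<le> 1"
      have "(X - f1 - 1) * b1 \<le> 0" "(Y - f2) * b2 \<le> Y - f2" "(Z - f3) * b3 \<le> Z - f3"
        using bnd bnd2 h1 h2 h3 b by auto
      then show "X * b1 + Y * b2 + Z * b3 \<le> real (f1 + 1) * b1 + real f2 * b2 + real f3 * b3 + 1"
        using assms(4) kk h1 by (simp add: algebra_simps)
    qed
  next
    assume kk: "k = f1 + f2 + f3 + 2"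
    show ?thesis
    proof (intro exI conjI allI impI)
      show "(f1 + 1) + (f2 + 1) + f3 = k" using kk by simp
      fix b1 b2 b3 :: real assume b: "0 \<le> b1 \<and> b1 \<le> 1 \<and> 0 \<le> b2 \<and> b2 \<le> 1 \<and> 0 \<le> b3 \<and> b3 \<le> 1"
      have "(X - f1 - 1) * b1 \<le> 0" "(Y - f2 - 1) * b2 \<le> 0" "(Z - f3) * b3 \<le> Z - f3"
        using bnd bnd2 h1 h2 h3 b by auto
      then show "X * b1 + Y * b2 + Z * b3 \<le> real (f1 + 1) * b1 + real (f2 + 1) * b2 + real f3 * b3 + 1"
        using assms(4) kk h3 by (simp add: algebra_simps)
    qed
  qed
qed

lemma three_points:
  fixes p :: "(real \<times> real) set"
  assumes "y \<in> convex hull p"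
  shows "\<exists>q1 q2 q3 u v w. q1 \<in> p \<and> q2 \<in> p \<and> q3 \<in> p \<and> 0 \<le> u \<and> 0 \<le> v \<and> 0 \<le> w \<and> u + v + w = 1
          \<and> y = u *\<^sub>R q1 + v *\<^sub>R q2 + w *\<^sub>R q3"
proof -
  obtain S where S: "finite S" "S \<subseteq> p" "card S \<le> 3" "y \<in> convex hull S"
    using assms caratheodory[of p] by auto
  have "S \<noteq> {}" using S by auto
  then have "card S = 1 \<or> card S = 2 \<or> card S = 3" using S card_gt_0_iff[of S] by linarith
  then obtain q1 q2 q3 where "S = {q1, q2, q3}"
    by (metis card_1_singletonE card_2_iff card_3_iff insert_absorb2 insert_commute)
  moreover obtain u v w where "0 \<le> u" "0 \<le> v" "0 \<le> w" "u + v + w = 1" "y = u *\<^sub>R q1 + v *\<^sub>R q2 + w *\<^sub>R q3"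
    using S(4) convex_hull_3[of q1 q2 q3] calculation by auto
  ultimately show ?thesis using S(2) by blast
qed




lemma Vrep:
  assumes "j1 < n" "j2 < n" "j3 < n"
  shows "Vh n k h (replicate_mset c1 j1 + replicate_mset c2 j2 + replicate_mset c3 j3)
       = (real c1 * h j1 + real c2 * h j2 + real c3 * h j3) / real k"
proof -
  have "Vh n k h (replicate_mset c1 j1 + replicate_mset c2 j2 + replicate_mset c3 j3)
     = (\<Sum>j<n. (if j = j1 then real c1 * h j1 / real k else 0) + (if j = j2 then real c2 * h j2 / real k else 0)
              + (if j = j3 then real c3 * h j3 / real k else 0))"
    unfolding Vh_def by (intro sum.cong) (auto simp: add_divide_distrib distrib_right)
  also have "\<dots> = (real c1 * h j1 + real c2 * h j2 + real c3 * h j3) / real k"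
    using assms by (simp add: sum.distrib add_divide_distrib)
  finally show ?thesis .
qed

lemma approx:
  assumes coll: "collection n a" and k: "k > 0" and y: "y \<in> convex hull (a ` {..<n})"
  shows "\<exists>\<mu>\<in>kUN k n. Vh n k (\<lambda>j. fst (a j)) \<mu> \<ge> fst y - 1 / real k
                  \<and> Vh n k (\<lambda>j. snd (a j)) \<mu> \<ge> snd y - 1 / real k"
proof -
  obtain q1 q2 q3 u v w where q: "q1 \<in> a ` {..<n}" "q2 \<in> a ` {..<n}" "q3 \<in> a ` {..<n}"
    and uvw: "0 \<le> u" "0 \<le> v" "0 \<le> w" "u + v + w = 1"
    and yq: "y = u *\<^sub>R q1 + v *\<^sub>R q2 + w *\<^sub>R q3"
    using three_points[OF y] by blast
  obtain j1 j2 j3 where j: "j1 < n" "j2 < n" "j3 < n" and qj: "q1 = a j1" "q2 = a j2" "q3 = a j3"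
    using q by auto
  have sumk: "real k * u + real k * v + real k * w = real k"
    using uvw(4) by (metis distrib_left mult.right_neutral)
  obtain c1 c2 c3 where c: "c1 + c2 + c3 = k" and cb: "\<And>b1 b2 b3. 0 \<le> b1 \<and> b1 \<le> 1 \<and> 0 \<le> b2 \<and> b2 \<le> 1 \<and> 0 \<le> b3 \<and> b3 \<le> 1
       \<Longrightarrow> (real k * u) * b1 + (real k * v) * b2 + (real k * w) * b3 \<le> real c1 * b1 + real c2 * b2 + real c3 * b3 + 1"
    using round3[of "real k * u" "real k * v" "real k * w" k] uvw sumk by auto
  define \<mu> where "\<mu> = replicate_mset c1 j1 + replicate_mset c2 j2 + replicate_mset c3 j3"
  have muK: "\<mu> \<in> kUN k n" unfolding kUN_def \<mu>_def using c j by (auto split: if_splits)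
  have ab: "\<forall>j<n. 0 \<le> fst (a j) \<and> fst (a j) \<le> 1 \<and> 0 \<le> snd (a j) \<and> snd (a j) \<le> 1"
    using coll unfolding collection_def by (auto simp: mem_Times_iff)
  have kpos: "real k > 0" using k by simp
  have bound: "(u * h j1 + v * h j2 + w * h j3) - 1 / real k \<le> Vh n k h \<mu>"
    if hb: "\<forall>j<n. 0 \<le> h j \<and> h j \<le> 1" for h
  proof -
    have "(real k * u) * h j1 + (real k * v) * h j2 + (real k * w) * h j3
          \<le> real c1 * h j1 + real c2 * h j2 + real c3 * h j3 + 1"
      using cb hb j by auto
    moreover have "real k * Vh n k h \<mu> = real c1 * h j1 + real c2 * h j2 + real c3 * h j3"
      unfolding \<mu>_def Vrep[OF j] using kpos by simp
    ultimately have "real k * (u * h j1 + v * h j2 + w * h j3) \<le> real k * Vh n k h \<mu> + 1"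
      by (simp add: algebra_simps)
    then show ?thesis using kpos by (simp add: field_simps)
  qed
  have "fst y = u * fst (a j1) + v * fst (a j2) + w * fst (a j3)"
       "snd y = u * snd (a j1) + v * snd (a j2) + w * snd (a j3)"
    using yq qj by auto
  then show ?thesis using muK bound[of "\<lambda>j. fst (a j)"] bound[of "\<lambda>j. snd (a j)"] ab by auto
qed




theorem proposition2:
  fixes k :: nat and \<delta> :: real
  assumes "k > 0" and "0 < \<delta>" and "\<delta> \<le> 1"
  shows "(\<forall>n a. collection n a \<longrightarrow>
            (\<exists>L1 L2. pure_NE (SA_signals k n) (\<lambda>M1 M2. outcome n a (SA_alloc k \<delta> n M1 M2)) L1 L2))
       \<and> (\<forall>n. anonymous (SA_signals k n) (SA_alloc k \<delta> n))
       \<and> (\<forall>n a L1 L2. collection n a \<longrightarrow>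
            pure_NE (SA_signals k n) (\<lambda>M1 M2. outcome n a (SA_alloc k \<delta> n M1 M2)) L1 L2 \<longrightarrow>
            \<not> (\<exists>y \<in> convex hull (a ` {..<n}).
                  fst y > fst (outcome n a (SA_alloc k \<delta> n L1 L2)) + \<delta> + 1 / real k \<and>
                  snd y > snd (outcome n a (SA_alloc k \<delta> n L1 L2)) + \<delta> + 1 / real k))"
proof (intro conjI allI impI)
  fix n a assume coll: "collection n a"
  define f where "f = Vh n k (\<lambda>j. fst (a j))"
  define g where "g = Vh n k (\<lambda>j. snd (a j))"
  obtain L1 L2 where L: "L1 \<subseteq> kUN k n" "L2 \<subseteq> kUN k n"
    and n1: "\<forall>L. L \<subseteq> kUN k n \<longrightarrow> pay (kUN k n) \<delta> f L L2 \<le> pay (kUN k n) \<delta> f L1 L2"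
    and n2: "\<forall>L. L \<subseteq> kUN k n \<longrightarrow> pay (kUN k n) \<delta> g L1 L \<le> pay (kUN k n) \<delta> g L1 L2"
    using existence[OF finite_kUN[of k n], where f = f and g = g and \<delta> = \<delta>] assms by auto
  have "pure_NE (SA_signals k n) (\<lambda>M1 M2. outcome n a (SA_alloc k \<delta> n M1 M2)) L1 L2"
    unfolding pure_NE_def SA_signals_def using L n1 n2
    by (simp add: outcome_pay f_def g_def)
  then show "\<exists>L1 L2. pure_NE (SA_signals k n) (\<lambda>M1 M2. outcome n a (SA_alloc k \<delta> n M1 M2)) L1 L2"
    by blast
next
  fix n
  have "SA_select k \<delta> n L1 L2 = SA_select k \<delta> n L2 L1" for L1 L2
    unfolding SA_select_def by (auto simp: fun_eq_iff Int_commute Un_commute)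
  then show "anonymous (SA_signals k n) (SA_alloc k \<delta> n)"
    unfolding anonymous_def SA_alloc_def by (auto simp: fun_eq_iff)
next
  fix n a L1 L2
  assume coll: "collection n a"
    and ne: "pure_NE (SA_signals k n) (\<lambda>M1 M2. outcome n a (SA_alloc k \<delta> n M1 M2)) L1 L2"
  define f where "f = Vh n k (\<lambda>j. fst (a j))"
  define g where "g = Vh n k (\<lambda>j. snd (a j))"
  have L: "L1 \<subseteq> kUN k n" "L2 \<subseteq> kUN k n" using ne unfolding pure_NE_def SA_signals_def by auto
  have n1: "\<forall>L. L \<subseteq> kUN k n \<longrightarrow> pay (kUN k n) \<delta> f L L2 \<le> pay (kUN k n) \<delta> f L1 L2"
    using ne L unfolding pure_NE_def SA_signals_def by (auto simp: outcome_pay f_def)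
  have n2: "\<forall>L. L \<subseteq> kUN k n \<longrightarrow> pay (kUN k n) \<delta> g L1 L \<le> pay (kUN k n) \<delta> g L1 L2"
    using ne L unfolding pure_NE_def SA_signals_def by (auto simp: outcome_pay g_def)
  have ab: "\<forall>j<n. 0 \<le> fst (a j) \<and> fst (a j) \<le> 1" "\<forall>j<n. 0 \<le> snd (a j) \<and> snd (a j) \<le> 1"
    using coll unfolding collection_def by (auto simp: mem_Times_iff)
  have bf: "\<forall>\<mu>\<in>kUN k n. 0 \<le> f \<mu> \<and> f \<mu> \<le> 1" unfolding f_def using Vh_bounds[OF _ ab(1) assms(1)] by simp
  have bg: "\<forall>\<mu>\<in>kUN k n. 0 \<le> g \<mu> \<and> g \<mu> \<le> 1" unfolding g_def using Vh_bounds[OF _ ab(2) assms(1)] by simp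
  show "\<not> (\<exists>y \<in> convex hull (a ` {..<n}).
                  fst y > fst (outcome n a (SA_alloc k \<delta> n L1 L2)) + \<delta> + 1 / real k \<and>
                  snd y > snd (outcome n a (SA_alloc k \<delta> n L1 L2)) + \<delta> + 1 / real k)"
  proof
    assume "\<exists>y \<in> convex hull (a ` {..<n}).
                  fst y > fst (outcome n a (SA_alloc k \<delta> n L1 L2)) + \<delta> + 1 / real k \<and>
                  snd y > snd (outcome n a (SA_alloc k \<delta> n L1 L2)) + \<delta> + 1 / real k"
    then obtain y where y: "y \<in> convex hull (a ` {..<n})"
      and y1: "fst y > pay (kUN k n) \<delta> f L1 L2 + \<delta> + 1 / real k"
      and y2: "snd y > pay (kUN k n) \<delta> g L1 L2 + \<delta> + 1 / real k"
      unfolding f_def g_def outcome_pay[OF L] by blast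
    obtain \<mu> where mu: "\<mu> \<in> kUN k n" and m1: "f \<mu> \<ge> fst y - 1 / real k" and m2: "g \<mu> \<ge> snd y - 1 / real k"
      using approx[OF coll assms(1) y] unfolding f_def[symmetric] g_def[symmetric] by blast
    have "\<not> (f \<mu> > pay (kUN k n) \<delta> f L1 L2 + \<delta> \<and> g \<mu> > pay (kUN k n) \<delta> g L1 L2 + \<delta>)"
      by (rule closeness[OF finite_kUN[of k n] assms(2) L n1 n2 bf bg mu])
    then show False using y1 y2 m1 m2 by linarith
  qed
qed


end
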